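(* Let $\mathcal{E}_1=[\theta_1,u_1]$, $\mathcal{E}_2=[\theta_2,u_2]$ be interval effect algebras with order-determining sets of states. Let $\Omega$ be a finite set, $n\ge1$, and for $i=1,\dots,n$ let $A_i=\{A_{ix}:x\in\Omega\}$ be an observable on $\mathcal{E}_1$, $\beta_{ix}\in\mathcal{S}(\mathcal{E}_2)$ for $x\in\Omega$, and $\lambda_i\in[0,1]$ with $\sum_i\lambda_i=1$. Define, for $x\in\Omega$ and $\alpha\in\mathcal{S}(\mathcal{E}_1)$, $\mathcal{I}_x(\alpha)=\sum_i\lambda_i\alpha(A_{ix})\beta_{ix}$. Then: (i) $\mathcal{I}=\{\mathcal{I}_x:x\in\Omega\}$ is an instrument from $\mathcal{E}_1$ to $\mathcal{E}_2$; (ii) for $\alpha\in\mathcal{S}(\mathcal{E}_1)$, setting $\alpha_i=\sum_x\alpha(A_{ix})\beta_{ix}$, we have $\alpha_i\in\mathcal{S}(\mathcal{E}_2)$ and $\overline{\mathcal{I}}(\alpha)=\sum_x\mathcal{I}_x(\alpha)=\sum_i\lambda_i\alpha_i\in\mathcal{S}(\mathcal{E}_2)$; (iii) $\widehat{\mathcal{I}}=\sum_i\lambda_iA_i$, i.e. for each $x\in\Omega$, $\sum_i\lambda_iA_{ix}\in\mathcal{E}_1$ and $\alpha(\sum_i\lambda_iA_{ix})=\mathcal{I}_x(\alpha)(u_2)$ for all $\alpha\in\mathcal{S}(\mathcal{E}_1)$.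
   Context: Let $V$ be a real vector space with zero $\theta$ and $K\subseteq V$ a positive cone ($\mathbb{R}^+K\subseteq K$, $K+K\subseteq K$, $K\cap(-K)=\{\theta\}$), ordered by $x\le y$ iff $y-x\in K$. For $u\in K$, $u\neq\theta$, the interval effect algebra is $\mathcal{E}=[\theta,u]=\{x\in K:x\le u\}$; $a\perp b$ means $a+b\le u$. A state is $s\colon\mathcal{E}\to[0,1]$ with $s(u)=1$ and $s(a+b)=s(a)+s(b)$ when $a\perp b$; $\mathcal{S}(\mathcal{E})$ is the set of all states, assumed order-determining ($a\le b$ iff $s(a)\le s(b)$ for all states $s$). Affine = preserves finite convex combinations. A substate is $\lambda s$, $\lambda\in[0,1]$, $s$ a state. An operation from $\mathcal{E}_1$ to $\mathcal{E}_2$ is an affine map from $\mathcal{S}(\mathcal{E}_1)$ to substates on $\mathcal{E}_2$; a channel is an operation with values in $\mathcal{S}(\mathcal{E}_2)$. An observable on $\mathcal{E}$ is a finite family $\{A_x:x\in\Omega\}\subseteq\mathcal{E}$ with $\sum_xA_x=u$. An instrument from $\mathcal{E}_1$ to $\mathcal{E}_2$ is a finite family $\{\mathcal{I}_x\}$ of operations whose pointwise sum $\overline{\mathcal{I}}=\sum_x\mathcal{I}_x$ is a channel; $\widehat{\mathcal{I}}_x$ denotes the (unique, by order-determination) effect in $\mathcal{E}_1$ with $\alpha(\widehat{\mathcal{I}}_x)=\mathcal{I}_x(\alpha)(u_2)$ for all $\alpha\in\mathcal{S}(\mathcal{E}_1)$, and $\widehat{\mathcal{I}}=\{\widehat{\mathcal{I}}_x\}$.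 (The instrument $\mathcal{I}$ in the claim is called a mixed Holevo instrument.) *)

theory Defs
  imports "HOL-Analysis.Analysis"
begin

definition positive_cone :: "'v::real_vector set \<Rightarrow> bool" where
  "positive_cone K \<longleftrightarrow>
     (\<forall>r::real. \<forall>x\<in>K. r \<ge> 0 \<longrightarrow> r *\<^sub>R x \<in> K) \<and>
     (\<forall>x\<in>K. \<forall>y\<in>K. x + y \<in> K) \<and>
     K \<inter> uminus ` K = {0}"

definition cone_le :: "'v::real_vector set \<Rightarrow> 'v \<Rightarrow> 'v \<Rightarrow> bool" where
  "cone_le K x y \<longleftrightarrow> y - x \<in> K"

definition interval_EA :: "'v::real_vector set \<Rightarrow> 'v \<Rightarrow> 'v set" where
  "interval_EA K u = {x \<in> K. cone_le K x u}"

(* States on [0,u].  Convention: a state is a function on V which vanishes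
   outside the effect algebra (so that states are determined by their values on E). *)
definition is_state :: "'v::real_vector set \<Rightarrow> 'v \<Rightarrow> ('v \<Rightarrow> real) \<Rightarrow> bool" where
  "is_state K u s \<longleftrightarrow>
     (\<forall>a\<in>interval_EA K u. 0 \<le> s a \<and> s a \<le> 1) \<and>
     s u = 1 \<and>
     (\<forall>a\<in>interval_EA K u. \<forall>b\<in>interval_EA K u.
        a + b \<in> interval_EA K u \<longrightarrow> s (a + b) = s a + s b) \<and>
     (\<forall>a. a \<notin> interval_EA K u \<longrightarrow> s a = 0)"

definition states :: "'v::real_vector set \<Rightarrow> 'v \<Rightarrow> ('v \<Rightarrow> real) set" where
  "states K u = {s. is_state K u s}"

definition order_determining :: "'v::real_vector set \<Rightarrow> 'v \<Rightarrow> bool" where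
  "order_determining K u \<longleftrightarrow>
     (\<forall>a\<in>interval_EA K u. \<forall>b\<in>interval_EA K u.
        cone_le K a b \<longleftrightarrow> (\<forall>s\<in>states K u. s a \<le> s b))"

definition interval_EA_setting :: "'v::real_vector set \<Rightarrow> 'v \<Rightarrow> bool" where
  "interval_EA_setting K u \<longleftrightarrow> positive_cone K \<and> u \<in> K \<and> u \<noteq> 0"

definition substates :: "'v::real_vector set \<Rightarrow> 'v \<Rightarrow> ('v \<Rightarrow> real) set" where
  "substates K u = {f. \<exists>l::real. 0 \<le> l \<and> l \<le> 1 \<and>
                        (\<exists>s\<in>states K u. f = (\<lambda>v. l * s v))}"

definition affine_on_fun :: "('a \<Rightarrow> real) set \<Rightarrow> (('a \<Rightarrow> real) \<Rightarrow> ('b \<Rightarrow> real)) \<Rightarrow> bool" where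
  "affine_on_fun S F \<longleftrightarrow>
     (\<forall>(I::nat set) (w::nat \<Rightarrow> real) (a::nat \<Rightarrow> 'a \<Rightarrow> real).
        finite I \<and> I \<noteq> {} \<and> (\<forall>i\<in>I. 0 \<le> w i \<and> a i \<in> S) \<and> sum w I = 1 \<longrightarrow>
        F (\<lambda>v. \<Sum>i\<in>I. w i * a i v) = (\<lambda>v. \<Sum>i\<in>I. w i * F (a i) v))"

definition operation ::
  "'v::real_vector set \<Rightarrow> 'v \<Rightarrow> 'w::real_vector set \<Rightarrow> 'w \<Rightarrow>
   (('v \<Rightarrow> real) \<Rightarrow> ('w \<Rightarrow> real)) \<Rightarrow> bool" where
  "operation K1 u1 K2 u2 F \<longleftrightarrow>
     affine_on_fun (states K1 u1) F \<and> (\<forall>a\<in>states K1 u1. F a \<in> substates K2 u2)"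

definition channel ::
  "'v::real_vector set \<Rightarrow> 'v \<Rightarrow> 'w::real_vector set \<Rightarrow> 'w \<Rightarrow>
   (('v \<Rightarrow> real) \<Rightarrow> ('w \<Rightarrow> real)) \<Rightarrow> bool" where
  "channel K1 u1 K2 u2 F \<longleftrightarrow>
     operation K1 u1 K2 u2 F \<and> (\<forall>a\<in>states K1 u1. F a \<in> states K2 u2)"

definition observable :: "'v::real_vector set \<Rightarrow> 'v \<Rightarrow> 'x set \<Rightarrow> ('x \<Rightarrow> 'v) \<Rightarrow> bool" where
  "observable K u \<Omega> A \<longleftrightarrow>
     finite \<Omega> \<and> (\<forall>x\<in>\<Omega>. A x \<in> interval_EA K u) \<and> (\<Sum>x\<in>\<Omega>. A x) = u"

definition instr_sum :: "'x set \<Rightarrow> ('x \<Rightarrow> ('v \<Rightarrow> real) \<Rightarrow> ('w \<Rightarrow> real)) \<Rightarrow>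
                         ('v \<Rightarrow> real) \<Rightarrow> ('w \<Rightarrow> real)" where
  "instr_sum \<Omega> I = (\<lambda>a. \<lambda>v. \<Sum>x\<in>\<Omega>. I x a v)"

definition instrument ::
  "'v::real_vector set \<Rightarrow> 'v \<Rightarrow> 'w::real_vector set \<Rightarrow> 'w \<Rightarrow>
   'x set \<Rightarrow> ('x \<Rightarrow> ('v \<Rightarrow> real) \<Rightarrow> ('w \<Rightarrow> real)) \<Rightarrow> bool" where
  "instrument K1 u1 K2 u2 \<Omega> I \<longleftrightarrow>
     finite \<Omega> \<and> (\<forall>x\<in>\<Omega>. operation K1 u1 K2 u2 (I x)) \<and>
     channel K1 u1 K2 u2 (instr_sum \<Omega> I)"

end

theory Submission
  imports Defs
begin
lemma additive_linear:
  fixes f :: "real \<Rightarrow> real" and r :: real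
  assumes add: "\<And>a b. 0 \<le> a \<Longrightarrow> 0 \<le> b \<Longrightarrow> a + b \<le> 1 \<Longrightarrow> f (a+b) = f a + f b"
    and nonneg: "\<And>a. 0 \<le> a \<Longrightarrow> a \<le> 1 \<Longrightarrow> 0 \<le> f a"
    and r: "0 \<le> r" "r \<le> 1"
  shows "f r = r * f 1"
proof -
  have mult: "f (real k / real m) = real k * f (1 / real m)" if "m \<ge> 1" "k \<le> m" for m k :: nat
    using that(2)
  proof (induction k)
    case 0
    have "f (0+0) = f 0 + f 0" by (rule add) auto
    then show ?case by simp
  next
    case (Suc k)
    have "real k / real m + 1 / real m = real (Suc k) / real m"
      by (simp add: add_divide_distrib)
    moreover have "real k / real m + 1 / real m \<le> 1"
      using Suc.prems that(1) by (simp add: add_divide_distrib[symmetric])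
    ultimately have "f (real (Suc k) / real m) = f (real k / real m) + f (1 / real m)"
      using add[of "real k / real m" "1 / real m"] by simp
    with Suc show ?case by (simp add: algebra_simps)
  qed
  have f1: "f 1 = real m * f (1 / real m)" if "m \<ge> 1" for m :: nat
    using mult[of m m] that by simp
  have f1nn: "0 \<le> f 1" using nonneg by simp
  have bound: "\<bar>f r - r * f 1\<bar> \<le> f 1 / real m" if m: "m \<ge> 1" for m :: nat
  proof -
    define k where "k = nat \<lfloor>r * real m\<rfloor>"
    have k1: "real k \<le> r * real m" using r unfolding k_def by simp
    have k2: "r * real m < real k + 1" using r unfolding k_def by linarith
    have km: "k \<le> m"
    proof -
      have "r * real m \<le> real m" using r m by (simp add: mult_left_le_one_le)
      with k1 show ?thesis by linarith
    qed
    have mpos: "real m > 0" using m by simp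
    define t where "t = r - real k / real m"
    have t0: "0 \<le> t" using k1 mpos unfolding t_def by (simp add: field_simps)
    have teq: "t = (r * real m - real k) / real m" using mpos unfolding t_def by (simp add: field_simps)
    have t1: "t \<le> 1 / real m" unfolding teq using k2 mpos by (intro divide_right_mono) auto
    have kmle: "real k / real m \<le> 1" using km mpos by simp
    have fr: "f r = f (real k / real m) + f t"
      using add[of "real k / real m" t] t0 r mpos unfolding t_def by simp
    have "f (1 / real m) = f t + f (1 / real m - t)"
      using add[of t "1 / real m - t"] t0 t1 mpos by simp
    moreover have "0 \<le> f (1 / real m - t)"
    proof (rule nonneg)
      show "0 \<le> 1 / real m - t" using t1 by simp
      have "1 / real m \<le> 1" using m by simp
      then show "1 / real m - t \<le> 1" using t0 by linarith
    qed
    ultimately have ft: "f t \<le> f 1 / real m" using f1[OF m] mpos by (simp add: field_simps)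
    have m1: "1 / real m \<le> 1" using m by simp
    have ftn: "0 \<le> f t" using nonneg t0 t1 m1 by simp
    have "f (real k / real m) = real k / real m * f 1"
      using mult[OF m km] f1[OF m] mpos by (simp add: field_simps)
    then have "f r - r * f 1 = f t - t * f 1" using fr unfolding t_def by (simp add: algebra_simps)
    moreover have "0 \<le> t * f 1" using t0 f1nn by simp
    moreover have "t * f 1 \<le> 1 / real m * f 1" using mult_right_mono[OF t1 f1nn] .
    then have "t * f 1 \<le> f 1 / real m" by simp
    ultimately show ?thesis using ft ftn by linarith
  qed
  show ?thesis
  proof (rule ccontr)
    assume ne: "f r \<noteq> r * f 1"
    define d where "d = \<bar>f r - r * f 1\<bar>"
    have dpos: "d > 0" using ne unfolding d_def by simp
    obtain N :: nat where N: "f 1 / d < real N" using reals_Archimedean2 by blast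
    have "f 1 < real N * d" using N dpos by (simp add: pos_divide_less_eq)
    also have "\<dots> \<le> real (Suc N) * d" using dpos by (intro mult_right_mono) auto
    finally have "f 1 / real (Suc N) < d" by (simp add: divide_less_eq mult.commute)
    with bound[of "Suc N"] show False unfolding d_def by simp
  qed
qed

lemma cone_zero: "positive_cone K \<Longrightarrow> 0 \<in> K"
  unfolding positive_cone_def by blast

lemma cone_add: "positive_cone K \<Longrightarrow> x \<in> K \<Longrightarrow> y \<in> K \<Longrightarrow> x + y \<in> K"
  unfolding positive_cone_def by blast

lemma cone_scale: "positive_cone K \<Longrightarrow> 0 \<le> r \<Longrightarrow> x \<in> K \<Longrightarrow> r *\<^sub>R x \<in> K"
  unfolding positive_cone_def by blast

lemma cone_sum: assumes "positive_cone K" "finite S" "\<And>x. x \<in> S \<Longrightarrow> f x \<in> K" shows "sum f S \<in> K"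
  using assms(2,3) by (induction S rule: finite_induct) (simp_all add: cone_zero cone_add assms(1))

lemma in_EA: "x \<in> interval_EA K u \<longleftrightarrow> x \<in> K \<and> u - x \<in> K"
  unfolding interval_EA_def cone_le_def by simp

lemma state_add: "is_state K u s \<Longrightarrow> a \<in> interval_EA K u \<Longrightarrow> b \<in> interval_EA K u \<Longrightarrow> a + b \<in> interval_EA K u \<Longrightarrow> s (a + b) = s a + s b"
  unfolding is_state_def by blast

lemma state_sum:
  assumes K: "positive_cone K" and s: "is_state K u s" and fin: "finite S"
    and AK: "\<And>x. x \<in> S \<Longrightarrow> A x \<in> K" and tot: "u - sum A S \<in> K"
  shows "s (sum A S) = (\<Sum>x\<in>S. s (A x))"
  using fin AK tot
proof (induction S rule: finite_induct)
  case empty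
  have "0 \<in> interval_EA K u" using cone_zero[OF K] empty by (simp add: in_EA)
  then have "s (0 + 0) = s 0 + s 0" using state_add[OF s, of 0 0] by simp
  then show ?case by simp
next
  case (insert y F)
  have sF: "sum A F \<in> K" using cone_sum[OF K insert(1)] insert(4) by auto
  have Ay: "A y \<in> K" using insert(4) by auto
  have tot': "u - sum A (insert y F) = u - A y - sum A F" using insert(1,2) by (simp add: algebra_simps)
  have uF: "u - sum A F \<in> K"
    using cone_add[OF K insert(5) Ay] tot' insert(1,2) by (simp add: algebra_simps)
  have uy: "u - A y \<in> K"
    using cone_add[OF K insert(5) sF] insert(1,2) by (simp add: algebra_simps)
  have "A y + sum A F \<in> interval_EA K u"
    using insert(1,2,5) cone_add[OF K Ay sF] by (simp add: in_EA)
  then have "s (A y + sum A F) = s (A y) + s (sum A F)"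
    using state_add[OF s] Ay sF uF uy by (simp add: in_EA)
  with insert(3)[OF _ uF] insert(1,2,4) show ?case by simp
qed

lemma state_hom:
  assumes K: "positive_cone K" and s: "is_state K u s" and x: "x \<in> interval_EA K u"
    and r: "0 \<le> r" "r \<le> 1"
  shows "s (r *\<^sub>R x) = r * s x"
proof -
  have mem: "a *\<^sub>R x \<in> interval_EA K u" if "0 \<le> a" "a \<le> 1" for a
  proof -
    have e: "u - a *\<^sub>R x = (u - x) + (1 - a) *\<^sub>R x" by (simp add: algebra_simps)
    have "(u - x) + (1 - a) *\<^sub>R x \<in> K"
      using x that by (intro cone_add[OF K] cone_scale[OF K]) (auto simp: in_EA)
    then have "u - a *\<^sub>R x \<in> K" by (subst e)
    moreover have "a *\<^sub>R x \<in> K" using x that cone_scale[OF K] by (auto simp: in_EA)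
    ultimately show ?thesis by (simp add: in_EA)
  qed
  have "(\<lambda>a. s (a *\<^sub>R x)) r = r * (\<lambda>a. s (a *\<^sub>R x)) 1"
  proof (rule additive_linear[OF _ _ r])
    fix a b :: real assume ab: "0 \<le> a" "0 \<le> b" "a + b \<le> 1"
    have "(a + b) *\<^sub>R x = a *\<^sub>R x + b *\<^sub>R x" by (simp add: scaleR_add_left)
    moreover have "s (a *\<^sub>R x + b *\<^sub>R x) = s (a *\<^sub>R x) + s (b *\<^sub>R x)"
      using s mem[of a] mem[of b] mem[of "a+b"] ab unfolding is_state_def
      by (simp add: scaleR_add_left)
    ultimately show "s ((a + b) *\<^sub>R x) = s (a *\<^sub>R x) + s (b *\<^sub>R x)" by simp
  next
    fix a :: real assume "0 \<le> a" "a \<le> 1"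
    then show "0 \<le> s (a *\<^sub>R x)" using s mem unfolding is_state_def by blast
  qed
  then show ?thesis by simp
qed

lemma state_nonneg: "is_state K u s \<Longrightarrow> 0 \<le> s a"
  unfolding is_state_def by (cases "a \<in> interval_EA K u") auto

lemma state_le1: "is_state K u s \<Longrightarrow> s a \<le> 1"
  unfolding is_state_def by (cases "a \<in> interval_EA K u") auto

lemma convex_state:
  assumes fin: "finite J" and w: "\<And>j. j \<in> J \<Longrightarrow> 0 \<le> w j" and ws: "sum w J = 1"
    and st: "\<And>j. j \<in> J \<Longrightarrow> is_state K u (s j)"
  shows "is_state K u (\<lambda>v. \<Sum>j\<in>J. w j * s j v)"
  unfolding is_state_def
proof (intro conjI ballI allI impI)
  fix a
  show "0 \<le> (\<Sum>j\<in>J. w j * s j a)" using w st state_nonneg by (intro sum_nonneg mult_nonneg_nonneg) blast+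
  have "(\<Sum>j\<in>J. w j * s j a) \<le> (\<Sum>j\<in>J. w j)"
  proof (rule sum_mono)
    fix j assume j: "j \<in> J"
    have "s j a \<le> 1" using state_le1 st[OF j] .
    then show "w j * s j a \<le> w j" using w[OF j] by (simp add: mult_left_le)
  qed
  then show "(\<Sum>j\<in>J. w j * s j a) \<le> 1" using ws by simp
next
  show "(\<Sum>j\<in>J. w j * s j u) = 1" using st ws unfolding is_state_def by simp
next
  fix a b assume "a \<in> interval_EA K u" "b \<in> interval_EA K u" "a + b \<in> interval_EA K u"
  then show "(\<Sum>j\<in>J. w j * s j (a + b)) = (\<Sum>j\<in>J. w j * s j a) + (\<Sum>j\<in>J. w j * s j b)"
    using st unfolding is_state_def by (simp add: distrib_left sum.distrib)
next
  fix a assume "a \<notin> interval_EA K u"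
  then show "(\<Sum>j\<in>J. w j * s j a) = 0" using st unfolding is_state_def by simp
qed

theorem theorem4p1:
  fixes K1 :: "'v::real_vector set" and u1 :: 'v
    and K2 :: "'w::real_vector set" and u2 :: 'w
    and \<Omega> :: "'x set" and n :: nat
    and A :: "nat \<Rightarrow> 'x \<Rightarrow> 'v"
    and bet :: "nat \<Rightarrow> 'x \<Rightarrow> ('w \<Rightarrow> real)"
    and lam :: "nat \<Rightarrow> real"
    and I :: "'x \<Rightarrow> ('v \<Rightarrow> real) \<Rightarrow> ('w \<Rightarrow> real)"
  assumes E1: "interval_EA_setting K1 u1" and OD1: "order_determining K1 u1"
    and E2: "interval_EA_setting K2 u2" and OD2: "order_determining K2 u2"
    and fin: "finite \<Omega>" and n: "n \<ge> 1"
    and obs: "\<forall>i\<in>{1..n}. observable K1 u1 \<Omega> (A i)"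
    and beta: "\<forall>i\<in>{1..n}. \<forall>x\<in>\<Omega>. bet i x \<in> states K2 u2"
    and lam: "\<forall>i\<in>{1..n}. 0 \<le> lam i \<and> lam i \<le> 1"
    and lamsum: "(\<Sum>i=1..n. lam i) = 1"
    and I_def: "\<forall>x a. I x a = (\<lambda>w. \<Sum>i=1..n. lam i * a (A i x) * bet i x w)"
  shows "instrument K1 u1 K2 u2 \<Omega> I
    \<and> (\<forall>a\<in>states K1 u1.
         (\<forall>i\<in>{1..n}. (\<lambda>w. \<Sum>x\<in>\<Omega>. a (A i x) * bet i x w) \<in> states K2 u2)
       \<and> instr_sum \<Omega> I a = (\<lambda>w. \<Sum>i=1..n. lam i * (\<Sum>x\<in>\<Omega>. a (A i x) * bet i x w))
       \<and> instr_sum \<Omega> I a \<in> states K2 u2)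
    \<and> (\<forall>x\<in>\<Omega>. (\<Sum>i=1..n. lam i *\<^sub>R A i x) \<in> interval_EA K1 u1
       \<and> (\<forall>a\<in>states K1 u1. a (\<Sum>i=1..n. lam i *\<^sub>R A i x) = I x a u2))"
proof -
  have Ieq: "I x a = (\<lambda>w. \<Sum>i=1..n. lam i * a (A i x) * bet i x w)" for x a
    using I_def by blast
  have K1: "positive_cone K1" using E1 unfolding interval_EA_setting_def by simp
  have Aint: "A i x \<in> interval_EA K1 u1" if "i \<in> {1..n}" "x \<in> \<Omega>" for i x
    using obs that unfolding observable_def by blast
  have Asum: "(\<Sum>x\<in>\<Omega>. A i x) = u1" if "i \<in> {1..n}" for i
    using obs that unfolding observable_def by blast
  have bst: "is_state K2 u2 (bet i x)" if "i \<in> {1..n}" "x \<in> \<Omega>" for i x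
    using beta that unfolding states_def by blast
  have lam0: "0 \<le> lam i" if "i \<in> {1..n}" for i using lam that by blast
  have asum1: "(\<Sum>x\<in>\<Omega>. a (A i x)) = 1" if a: "is_state K1 u1 a" and i: "i \<in> {1..n}" for a i
  proof -
    have "a (\<Sum>x\<in>\<Omega>. A i x) = (\<Sum>x\<in>\<Omega>. a (A i x))"
      using state_sum[OF K1 a fin, of "A i"] Aint[OF i] Asum[OF i] cone_zero[OF K1]
      by (simp add: in_EA)
    then show ?thesis using Asum[OF i] a unfolding is_state_def by simp
  qed
  have alpha: "is_state K2 u2 (\<lambda>w. \<Sum>x\<in>\<Omega>. a (A i x) * bet i x w)"
    if a: "is_state K1 u1 a" and i: "i \<in> {1..n}" for a i
    by (rule convex_state[OF fin]) (use state_nonneg[OF a] asum1[OF a i] bst[OF i] in auto)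
  have isum: "instr_sum \<Omega> I a = (\<lambda>w. \<Sum>i=1..n. lam i * (\<Sum>x\<in>\<Omega>. a (A i x) * bet i x w))" for a
    unfolding instr_sum_def Ieq
    by (rule ext) (simp add: sum_distrib_left mult.assoc sum.swap[of _ \<Omega>])
  have isum_st: "is_state K2 u2 (instr_sum \<Omega> I a)" if a: "is_state K1 u1 a" for a
    unfolding isum
    by (rule convex_state) (use lam0 lamsum alpha[OF a] in auto)
  have affI: "affine_on_fun (states K1 u1) (I x)" for x
    unfolding affine_on_fun_def
  proof (intro allI impI)
    fix J :: "nat set" and w :: "nat \<Rightarrow> real" and a :: "nat \<Rightarrow> 'v \<Rightarrow> real"
    show "I x (\<lambda>v. \<Sum>j\<in>J. w j * a j v) = (\<lambda>v. \<Sum>j\<in>J. w j * I x (a j) v)"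
      unfolding Ieq
      by (rule ext) (simp add: sum_distrib_left sum_distrib_right mult_ac sum.swap[of _ J])
  qed
  have affS: "affine_on_fun (states K1 u1) (instr_sum \<Omega> I)"
    unfolding affine_on_fun_def
  proof (intro allI impI)
    fix J :: "nat set" and w :: "nat \<Rightarrow> real" and a :: "nat \<Rightarrow> 'v \<Rightarrow> real"
    show "instr_sum \<Omega> I (\<lambda>v. \<Sum>j\<in>J. w j * a j v) = (\<lambda>v. \<Sum>j\<in>J. w j * instr_sum \<Omega> I (a j) v)"
      unfolding isum
      by (rule ext) (simp add: sum_distrib_left sum_distrib_right mult_ac sum.swap[of _ J])
  qed
  have subI: "I x a \<in> substates K2 u2" if a: "is_state K1 u1 a" and x: "x \<in> \<Omega>" for a x
  proof -
    define l where "l = (\<Sum>i=1..n. lam i * a (A i x))"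
    have cnn: "0 \<le> lam i * a (A i x)" if "i \<in> {1..n}" for i
      using lam0[OF that] state_nonneg[OF a] by simp
    have l0: "0 \<le> l" unfolding l_def using cnn by (intro sum_nonneg) auto
    have "l \<le> (\<Sum>i=1..n. lam i)" unfolding l_def
    proof (rule sum_mono)
      fix i assume i: "i \<in> {1..n}"
      show "lam i * a (A i x) \<le> lam i" using lam0[OF i] state_le1[OF a] by (simp add: mult_left_le)
    qed
    then have l1: "l \<le> 1" using lamsum by simp
    show ?thesis
    proof (cases "l = 0")
      case True
      have "\<forall>i\<in>{1..n}. lam i * a (A i x) = 0"
        using True cnn unfolding l_def by (subst sum_nonneg_eq_0_iff[symmetric]) auto
      then have "I x a = (\<lambda>v. 0 * bet 1 x v)" unfolding Ieq by (auto intro!: ext sum.neutral)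
      moreover have "bet 1 x \<in> states K2 u2" using bst[of 1 x] n x unfolding states_def by simp
      ultimately show ?thesis unfolding substates_def by fastforce
    next
      case False
      then have lp: "l > 0" using l0 by simp
      define s where "s = (\<lambda>v. \<Sum>i=1..n. (lam i * a (A i x) / l) * bet i x v)"
      have "is_state K2 u2 s" unfolding s_def
      proof (rule convex_state)
        show "(\<Sum>i=1..n. lam i * a (A i x) / l) = 1"
          using lp unfolding sum_divide_distrib[symmetric] l_def by simp
      qed (use cnn lp bst x in auto)
      moreover have "I x a = (\<lambda>v. l * s v)"
        unfolding Ieq s_def using lp by (auto intro!: ext simp: sum_distrib_left)
      ultimately show ?thesis unfolding substates_def states_def using l0 l1 by blast
    qed
  qed
  have part1: "instrument K1 u1 K2 u2 \<Omega> I"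
    unfolding instrument_def channel_def operation_def
  proof (intro conjI ballI fin affI affS)
    show "I x a \<in> substates K2 u2" if "x \<in> \<Omega>" "a \<in> states K1 u1" for x a
      using subI that unfolding states_def by blast
    show "instr_sum \<Omega> I a \<in> states K2 u2" if "a \<in> states K1 u1" for a
      using isum_st that unfolding states_def by blast
    then show "instr_sum \<Omega> I a \<in> substates K2 u2" if "a \<in> states K1 u1" for a
      unfolding substates_def using that by (intro CollectI exI[of _ 1]) auto
  qed
  have part2: "\<forall>a\<in>states K1 u1.
         (\<forall>i\<in>{1..n}. (\<lambda>w. \<Sum>x\<in>\<Omega>. a (A i x) * bet i x w) \<in> states K2 u2)
       \<and> instr_sum \<Omega> I a = (\<lambda>w. \<Sum>i=1..n. lam i * (\<Sum>x\<in>\<Omega>. a (A i x) * bet i x w))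
       \<and> instr_sum \<Omega> I a \<in> states K2 u2"
    using alpha isum isum_st unfolding states_def by blast
  have part3: "(\<Sum>i=1..n. lam i *\<^sub>R A i x) \<in> interval_EA K1 u1
       \<and> (\<forall>a\<in>states K1 u1. a (\<Sum>i=1..n. lam i *\<^sub>R A i x) = I x a u2)" if x: "x \<in> \<Omega>" for x
  proof -
    have inK: "lam i *\<^sub>R A i x \<in> K1" if "i \<in> {1..n}" for i
      using cone_scale[OF K1 lam0[OF that]] Aint[OF that x] by (simp add: in_EA)
    have "u1 - (\<Sum>i=1..n. lam i *\<^sub>R A i x) = (\<Sum>i=1..n. lam i *\<^sub>R (u1 - A i x))"
      using lamsum by (simp add: scaleR_diff_right sum_subtractf scaleR_sum_left[symmetric])
    moreover have "(\<Sum>i=1..n. lam i *\<^sub>R (u1 - A i x)) \<in> K1"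
      using Aint x lam0 by (intro cone_sum[OF K1] cone_scale[OF K1]) (auto simp: in_EA)
    ultimately have tot: "u1 - (\<Sum>i=1..n. lam i *\<^sub>R A i x) \<in> K1" by simp
    have mem: "(\<Sum>i=1..n. lam i *\<^sub>R A i x) \<in> interval_EA K1 u1"
      using tot cone_sum[OF K1 finite_atLeastAtMost inK] by (simp add: in_EA)
    have "a (\<Sum>i=1..n. lam i *\<^sub>R A i x) = I x a u2" if a: "a \<in> states K1 u1" for a
    proof -
      have as: "is_state K1 u1 a" using a unfolding states_def by simp
      have "a (\<Sum>i=1..n. lam i *\<^sub>R A i x) = (\<Sum>i=1..n. a (lam i *\<^sub>R A i x))"
        using state_sum[OF K1 as, of "{1..n}" "\<lambda>i. lam i *\<^sub>R A i x"] inK tot by simp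
      also have "\<dots> = (\<Sum>i=1..n. lam i * a (A i x))"
        using state_hom[OF K1 as Aint[OF _ x]] lam by (intro sum.cong) auto
      also have "\<dots> = I x a u2"
        unfolding Ieq using bst x unfolding is_state_def by (auto intro: sum.cong)
      finally show ?thesis .
    qed
    with mem show ?thesis by blast
  qed
  show ?thesis using part1 part2 part3 by blast
qed

end
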